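(* Let $n\geq 1$ with $n\neq 5$, and let $G$ be an $n$-vertex planar graph containing no subgraph isomorphic to $S_{2,2}$. Then $e(G)\leq 2n-2$.
   Context: All graphs are finite and simple; $e(G)$ denotes the number of edges of $G$. The double star $S_{2,2}$ is the tree obtained from an edge $xy$ by joining $x$ to two new vertices and $y$ to two further new vertices (6 vertices in total). *)

theory Defs
  imports "HOL-Analysis.Analysis"
begin

definition simple_graph :: "'a set \<Rightarrow> 'a set set \<Rightarrow> bool" where
  "simple_graph V E \<longleftrightarrow> finite V \<and> (\<forall>e\<in>E. e \<subseteq> V \<and> card e = 2)"

text \<open>Planarity: a drawing in the plane (complex numbers = R^2), vertices mapped to
distinct points, each edge drawn as an arc between the images of its endpoints,
meeting the drawn vertices only at its endpoints, and two distinct edges meet only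
in the images of common endpoints.\<close>
definition planar :: "'a set \<Rightarrow> 'a set set \<Rightarrow> bool" where
  "planar V E \<longleftrightarrow>
     (\<exists>(p :: 'a \<Rightarrow> complex) (\<gamma> :: 'a set \<Rightarrow> real \<Rightarrow> complex).
        inj_on p V \<and>
        (\<forall>e\<in>E. arc (\<gamma> e) \<and> {pathstart (\<gamma> e), pathfinish (\<gamma> e)} = p ` e \<and>
                 path_image (\<gamma> e) \<inter> p ` V = p ` e) \<and>
        (\<forall>e\<in>E. \<forall>f\<in>E. e \<noteq> f \<longrightarrow> path_image (\<gamma> e) \<inter> path_image (\<gamma> f) \<subseteq> p ` (e \<inter> f)))"

text \<open>G contains a (not necessarily induced) subgraph isomorphic to the double star S_{2,2}:
an edge xy, x adjacent to two further vertices a,b, y adjacent to two further vertices c,d,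
all six vertices distinct.\<close>
definition contains_S22 :: "'a set \<Rightarrow> 'a set set \<Rightarrow> bool" where
  "contains_S22 V E \<longleftrightarrow>
     (\<exists>x y a b c d. distinct [x, y, a, b, c, d] \<and> {x, y, a, b, c, d} \<subseteq> V \<and>
        {x, y} \<in> E \<and> {x, a} \<in> E \<and> {x, b} \<in> E \<and> {y, c} \<in> E \<and> {y, d} \<in> E)"

end

theory Submission
  imports Defs "HOL-Complex_Analysis.Winding_Numbers"
begin

lemma wn_inside_iff:
  fixes k :: "real \<Rightarrow> complex"
  assumes "simple_path k" "pathfinish k = pathstart k" "z \<notin> path_image k"
  shows "z \<in> inside (path_image k) \<longleftrightarrow> winding_number k z \<noteq> 0"
proof
  assume "z \<in> inside (path_image k)"
  then show "winding_number k z \<noteq> 0"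
    using simple_closed_path_norm_winding_number_inside[OF assms(1)] by force
next
  assume "winding_number k z \<noteq> 0"
  moreover have "z \<in> inside (path_image k) \<or> z \<in> outside (path_image k)"
    using assms(3) inside_Un_outside by blast
  ultimately show "z \<in> inside (path_image k)"
    using winding_number_zero_in_outside assms simple_path_imp_path by blast
qed

lemma theta_parity:
  fixes P1 P2 A :: "real \<Rightarrow> complex"
  assumes "arc P1" "arc P2" "arc A"
    and "pathstart P1 = a" "pathfinish P1 = c" "pathstart P2 = a" "pathfinish P2 = c"
    and "pathstart A = a" "pathfinish A = c"
    and "path_image P1 \<inter> path_image P2 \<subseteq> {a,c}"
    and "path_image P1 \<inter> path_image A \<subseteq> {a,c}"
    and "path_image P2 \<inter> path_image A \<subseteq> {a,c}"
    and z: "z \<notin> path_image P1" "z \<notin> path_image P2" "z \<notin> path_image A"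
  shows "z \<in> inside (path_image P1 \<union> path_image P2) \<longleftrightarrow>
          \<not> (z \<in> inside (path_image P1 \<union> path_image A) \<longleftrightarrow> z \<in> inside (path_image A \<union> path_image P2))"
proof -
  define j where "j = P1 +++ reversepath P2"
  define k1 where "k1 = P1 +++ reversepath A"
  define k2 where "k2 = A +++ reversepath P2"
  have pth: "path P1" "path P2" "path A" using assms arc_imp_path by auto
  have sj: "simple_path j" unfolding j_def
    by (rule simple_path_join_loop) (use assms in \<open>auto simp: arc_reversepath\<close>)
  have sk1: "simple_path k1" unfolding k1_def
    by (rule simple_path_join_loop) (use assms in \<open>auto simp: arc_reversepath\<close>)
  have sk2: "simple_path k2" unfolding k2_def
    by (rule simple_path_join_loop) (use assms in \<open>auto simp: arc_reversepath\<close>)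
  have ij: "path_image j = path_image P1 \<union> path_image P2"
    unfolding j_def using assms by (simp add: path_image_join)
  have ik1: "path_image k1 = path_image P1 \<union> path_image A"
    unfolding k1_def using assms by (simp add: path_image_join)
  have ik2: "path_image k2 = path_image A \<union> path_image P2"
    unfolding k2_def using assms by (simp add: path_image_join)
  have lj: "pathfinish j = pathstart j" "pathfinish k1 = pathstart k1" "pathfinish k2 = pathstart k2"
    unfolding j_def k1_def k2_def using assms by auto
  have wj: "winding_number j z = winding_number P1 z - winding_number P2 z"
    unfolding j_def using pth z assms
    by (simp add: winding_number_join winding_number_reversepath)
  have wk1: "winding_number k1 z = winding_number P1 z - winding_number A z"
    unfolding k1_def using pth z assms
    by (simp add: winding_number_join winding_number_reversepath)
  have wk2: "winding_number k2 z = winding_number A z - winding_number P2 z"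
    unfolding k2_def using pth z assms
    by (simp add: winding_number_join winding_number_reversepath)
  have cj: "winding_number j z \<in> {-1,0,1}"
    using simple_closed_path_winding_number_cases[OF sj lj(1)] z ij by auto
  have c1: "winding_number k1 z \<in> {-1,0,1}"
    using simple_closed_path_winding_number_cases[OF sk1 lj(2)] z ik1 by auto
  have c2: "winding_number k2 z \<in> {-1,0,1}"
    using simple_closed_path_winding_number_cases[OF sk2 lj(3)] z ik2 by auto
  have sum: "winding_number j z = winding_number k1 z + winding_number k2 z"
    using wj wk1 wk2 by simp
  have e0: "z \<in> inside (path_image P1 \<union> path_image P2) \<longleftrightarrow> winding_number j z \<noteq> 0"
    using wn_inside_iff[OF sj lj(1)] z ij by auto
  have e1: "z \<in> inside (path_image P1 \<union> path_image A) \<longleftrightarrow> winding_number k1 z \<noteq> 0"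
    using wn_inside_iff[OF sk1 lj(2)] z ik1 by auto
  have e2: "z \<in> inside (path_image A \<union> path_image P2) \<longleftrightarrow> winding_number k2 z \<noteq> 0"
    using wn_inside_iff[OF sk2 lj(3)] z ik2 by auto
  show ?thesis unfolding e0 e1 e2 using cj c1 c2 sum
    by (auto simp: algebra_simps)
qed

lemma conn_side:
  fixes k :: "real \<Rightarrow> complex"
  assumes "simple_path k" "pathfinish k = pathstart k"
    and "connected X" "X \<inter> path_image k = {}" "x \<in> X" "y \<in> X"
  shows "x \<in> inside (path_image k) \<longleftrightarrow> y \<in> inside (path_image k)"
proof -
  have J: "open (inside (path_image k))" "open (outside (path_image k))"
    using Jordan_inside_outside[OF assms(1,2)] by auto
  have "X \<subseteq> inside (path_image k) \<union> outside (path_image k)"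
    using assms(4) inside_Un_outside by blast
  then have "inside (path_image k) \<inter> X = {} \<or> outside (path_image k) \<inter> X = {}"
    using connectedD[OF assms(3) J] inside_Int_outside by blast
  then show ?thesis using assms(5,6) \<open>X \<subseteq> _\<close> by blast
qed

lemma arc_image_split:
  assumes "arc g"
  shows "path_image g \<subseteq> g ` {0<..<1} \<union> {pathstart g, pathfinish g}"
proof
  fix z assume "z \<in> path_image g"
  then obtain t where t: "t \<in> {0..1}" "z = g t" by (auto simp: path_image_def)
  then show "z \<in> g ` {0<..<1} \<union> {pathstart g, pathfinish g}"
    by (cases "t = 0"; cases "t = 1") (auto simp: pathstart_def pathfinish_def)
qed

lemma arc_open_avoid:
  assumes "arc g" "t \<in> {0<..<1}"
  shows "g t \<noteq> pathstart g" "g t \<noteq> pathfinish g" "g t \<in> path_image g"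
proof -
  have inj: "inj_on g {0..1}" using assms(1) by (simp add: arc_def)
  show "g t \<noteq> pathstart g" unfolding pathstart_def
    using inj_onD[OF inj, of t 0] assms(2) by auto
  show "g t \<noteq> pathfinish g" unfolding pathfinish_def
    using inj_onD[OF inj, of t 1] assms(2) by auto
  show "g t \<in> path_image g" using assms(2) by (auto simp: path_image_def)
qed

lemma arc_open_props:
  assumes "arc g"
  shows "connected (g ` {0<..<1})" "g ` {0<..<1} \<noteq> {}"
        "pathstart g \<in> closure (g ` {0<..<1})" "pathfinish g \<in> closure (g ` {0<..<1})"
proof -
  have c: "continuous_on {0..1} g" using assms arc_imp_path path_def by blast
  then have c': "continuous_on {0<..<1} g" by (rule continuous_on_subset) auto
  show "connected (g ` {0<..<1})"
    by (rule connected_continuous_image[OF c']) simp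
  show "g ` {0<..<1} \<noteq> {}" by auto
  have "g ` closure {0<..<1::real} \<subseteq> closure (g ` {0<..<1})"
    by (rule image_closure_subset) (use c closure_subset[of "g ` {0<..<1}"] in auto)
  then have "g ` {0..1} \<subseteq> closure (g ` {0<..<1})" by simp
  then show "pathstart g \<in> closure (g ` {0<..<1})" "pathfinish g \<in> closure (g ` {0<..<1})"
    by (auto simp: pathstart_def pathfinish_def)
qed

lemma chord_conflict:
  fixes P1 P2 A B :: "real \<Rightarrow> complex"
  assumes arcs: "arc P1" "arc P2" "arc A" "arc B"
    and ends: "pathstart P1 = a" "pathfinish P1 = c" "pathstart P2 = a" "pathfinish P2 = c"
       "pathstart A = a" "pathfinish A = c" "pathstart B = b" "pathfinish B = d"
    and i12: "path_image P1 \<inter> path_image P2 \<subseteq> {a,c}"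
    and i1A: "path_image P1 \<inter> path_image A \<subseteq> {a,c}"
    and i2A: "path_image P2 \<inter> path_image A \<subseteq> {a,c}"
    and bP: "b \<in> path_image P1" "b \<noteq> a" "b \<noteq> c"
    and dP: "d \<in> path_image P2" "d \<noteq> a" "d \<noteq> c"
    and iBJ: "path_image B \<inter> (path_image P1 \<union> path_image P2) \<subseteq> {b,d}"
    and iBA: "path_image B \<inter> path_image A = {}"
    and side: "S = inside (path_image P1 \<union> path_image P2) \<or> S = outside (path_image P1 \<union> path_image P2)"
    and AS: "A ` {0<..<1} \<subseteq> S" and BS: "B ` {0<..<1} \<subseteq> S"
  shows False
proof -
  define J where "J = path_image P1 \<union> path_image P2"
  define j where "j = P1 +++ reversepath P2"
  define k1 where "k1 = P1 +++ reversepath A"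
  define k2 where "k2 = A +++ reversepath P2"
  have sj: "simple_path j" unfolding j_def
    by (rule simple_path_join_loop) (use assms in \<open>auto simp: arc_reversepath\<close>)
  have sk1: "simple_path k1" unfolding k1_def
    by (rule simple_path_join_loop) (use assms in \<open>auto simp: arc_reversepath\<close>)
  have sk2: "simple_path k2" unfolding k2_def
    by (rule simple_path_join_loop) (use assms in \<open>auto simp: arc_reversepath\<close>)
  have ij: "path_image j = J"
    unfolding j_def J_def using assms by (simp add: path_image_join)
  have ik1: "path_image k1 = path_image P1 \<union> path_image A"
    unfolding k1_def using assms by (simp add: path_image_join)
  have ik2: "path_image k2 = path_image A \<union> path_image P2"
    unfolding k2_def using assms by (simp add: path_image_join)
  have lj: "pathfinish j = pathstart j" "pathfinish k1 = pathstart k1" "pathfinish k2 = pathstart k2"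
    unfolding j_def k1_def k2_def using assms by auto
  note JIO = Jordan_inside_outside[OF sj lj(1), unfolded ij]
  define R where "R = (if S = inside J then outside J else inside J)"
  have Rprops: "connected R" "R \<noteq> {}" "R \<inter> J = {}" "frontier R = J" "R \<inter> S = {}"
  proof -
    have disj: "\<And>z. z \<in> inside J \<Longrightarrow> z \<notin> outside J" using inside_Int_outside[of J] by blast
    show "connected R" "R \<noteq> {}" "R \<inter> J = {}" "frontier R = J" "R \<inter> S = {}"
      using JIO side disj unfolding R_def J_def[symmetric] by auto
  qed
  have aJ: "a \<in> J" "c \<in> J" unfolding J_def using ends by auto
  have RA: "R \<inter> path_image A = {}"
  proof -
    have "path_image A \<subseteq> A ` {0<..<1} \<union> {a,c}" using arc_image_split[OF arcs(3)] ends by simp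
    moreover have "R \<inter> A ` {0<..<1} = {}" using Rprops(5) AS by blast
    moreover have "R \<inter> {a,c} = {}" using Rprops(3) aJ by blast
    ultimately show ?thesis by blast
  qed
  define Bo where "Bo = B ` {0<..<1}"
  note Bop = arc_open_props[OF arcs(4), folded Bo_def]
  have Bo_off: "Bo \<inter> path_image P1 = {}" "Bo \<inter> path_image P2 = {}" "Bo \<inter> path_image A = {}"
  proof -
    have "\<And>t. t \<in> {0<..<1} \<Longrightarrow> B t \<in> path_image B \<and> B t \<noteq> b \<and> B t \<noteq> d"
      using arc_open_avoid[OF arcs(4)] ends by metis
    then have "\<And>t. t \<in> {0<..<1} \<Longrightarrow> B t \<notin> path_image P1 \<and> B t \<notin> path_image P2 \<and> B t \<notin> path_image A"
      using iBJ iBA by blast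
    then show "Bo \<inter> path_image P1 = {}" "Bo \<inter> path_image P2 = {}" "Bo \<inter> path_image A = {}"
      unfolding Bo_def by auto
  qed
  have dK1: "d \<notin> path_image P1 \<union> path_image A" using dP i12 i2A by blast
  have bK2: "b \<notin> path_image A \<union> path_image P2" using bP i12 i1A by blast
  have clR: "closure R \<supseteq> J" using Rprops(4) frontier_def by (metis Diff_subset)
  have cRd: "connected (R \<union> {d})"
    by (rule connected_intermediate_closure[OF Rprops(1)]) (use clR dP J_def closure_subset[of R] in auto)
  have cRb: "connected (R \<union> {b})"
    by (rule connected_intermediate_closure[OF Rprops(1)]) (use clR bP J_def closure_subset[of R] in auto)
  have cBd: "connected (Bo \<union> {d})"
    by (rule connected_intermediate_closure[OF Bop(1)]) (use Bop(4) ends closure_subset[of Bo] in auto)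
  have cBb: "connected (Bo \<union> {b})"
    by (rule connected_intermediate_closure[OF Bop(1)]) (use Bop(3) ends closure_subset[of Bo] in auto)
  obtain r where r: "r \<in> R" using Rprops(2) by blast
  obtain x where x: "x \<in> Bo" using Bop(2) by blast
  have R1: "r \<in> inside (path_image k1) \<longleftrightarrow> d \<in> inside (path_image k1)"
    by (rule conn_side[OF sk1 lj(2) cRd]) (use Rprops(3) RA dK1 r J_def ik1 in auto)
  have B1: "x \<in> inside (path_image k1) \<longleftrightarrow> d \<in> inside (path_image k1)"
    by (rule conn_side[OF sk1 lj(2) cBd]) (use Bo_off dK1 x ik1 in auto)
  have R2: "r \<in> inside (path_image k2) \<longleftrightarrow> b \<in> inside (path_image k2)"
    by (rule conn_side[OF sk2 lj(3) cRb]) (use Rprops(3) RA bK2 r J_def ik2 in auto)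
  have B2: "x \<in> inside (path_image k2) \<longleftrightarrow> b \<in> inside (path_image k2)"
    by (rule conn_side[OF sk2 lj(3) cBb]) (use Bo_off bK2 x ik2 in auto)
  have pr: "r \<in> inside J \<longleftrightarrow> \<not> (r \<in> inside (path_image k1) \<longleftrightarrow> r \<in> inside (path_image k2))"
    unfolding J_def ik1 ik2
    by (rule theta_parity[OF arcs(1-3) ends(1-6) i12 i1A i2A]) (use r Rprops(3) RA J_def in auto)
  have px: "x \<in> inside J \<longleftrightarrow> \<not> (x \<in> inside (path_image k1) \<longleftrightarrow> x \<in> inside (path_image k2))"
    unfolding J_def ik1 ik2
    by (rule theta_parity[OF arcs(1-3) ends(1-6) i12 i1A i2A]) (use x Bo_off in auto)
  have "r \<in> inside J \<longleftrightarrow> x \<in> inside J" using pr px R1 B1 R2 B2 by blast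
  moreover have "x \<in> S" using x BS Bo_def by blast
  moreover have "\<And>z. z \<in> inside J \<Longrightarrow> z \<notin> outside J" using inside_Int_outside[of J] by blast
  ultimately show False using r Rprops(5) side unfolding R_def J_def[symmetric]
    by (auto split: if_splits)
qed

lemma open_arc_side:
  fixes A :: "real \<Rightarrow> complex"
  assumes "arc A" "A ` {0<..<1} \<inter> C = {}" "simple_path j" "pathfinish j = pathstart j" "path_image j = C"
  shows "A ` {0<..<1} \<subseteq> inside C \<or> A ` {0<..<1} \<subseteq> outside C"
proof -
  note ap = arc_open_props[OF assms(1)]
  have J: "open (inside C)" "open (outside C)"
    using Jordan_inside_outside[OF assms(3,4)] assms(5) by auto
  have "A ` {0<..<1} \<subseteq> inside C \<union> outside C"
    using assms(2) inside_Un_outside by blast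
  then have "inside C \<inter> A ` {0<..<1} = {} \<or> outside C \<inter> A ` {0<..<1} = {}"
    using connectedD[OF ap(1) J] inside_Int_outside by blast
  then show ?thesis using \<open>A ` {0<..<1} \<subseteq> inside C \<union> outside C\<close> by blast
qed

lemma conflict_generic:
  fixes P :: "nat \<Rightarrow> complex" and g :: "nat \<Rightarrow> nat \<Rightarrow> real \<Rightarrow> complex"
  assumes Pd: "\<And>i j. i < 5 \<Longrightarrow> j < 5 \<Longrightarrow> i \<noteq> j \<Longrightarrow> P i \<noteq> P j"
    and ga: "\<And>i j. i < 5 \<Longrightarrow> j < 5 \<Longrightarrow> i \<noteq> j \<Longrightarrow> arc (g i j) \<and> pathstart (g i j) = P i \<and> pathfinish (g i j) = P j"
    and cross: "\<And>i j k l. i < 5 \<Longrightarrow> j < 5 \<Longrightarrow> k < 5 \<Longrightarrow> l < 5 \<Longrightarrow> i \<noteq> j \<Longrightarrow> k \<noteq> l \<Longrightarrow> {i,j} \<noteq> {k,l} \<Longrightarrow>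
          path_image (g i j) \<inter> path_image (g k l) \<subseteq> P ` ({i,j} \<inter> {k,l})"
    and lt: "a < 5" "x < 5" "c < 5" "y < 5" "z < 5"
    and dist: "distinct [a,x,c,y,z]"
    and w: "w = y \<or> w = z"
  shows "\<not> (g a c ` {0<..<1} \<subseteq> inside (path_image (g a x) \<union> path_image (g x c) \<union> path_image (g a y) \<union> path_image (g y z) \<union> path_image (g z c))
          \<longleftrightarrow> g x w ` {0<..<1} \<subseteq> inside (path_image (g a x) \<union> path_image (g x c) \<union> path_image (g a y) \<union> path_image (g y z) \<union> path_image (g z c)))"
proof
  let ?C = "path_image (g a x) \<union> path_image (g x c) \<union> path_image (g a y) \<union> path_image (g y z) \<union> path_image (g z c)"
  assume same: "g a c ` {0<..<1} \<subseteq> inside ?C \<longleftrightarrow> g x w ` {0<..<1} \<subseteq> inside ?C"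
  have wl: "w < 5" "w \<noteq> a" "w \<noteq> x" "w \<noteq> c" using w lt dist by auto
  define P1 where "P1 = g a x +++ g x c"
  define P2 where "P2 = g a y +++ (g y z +++ g z c)"
  define A where "A = g a c"
  define B where "B = g x w"
  note G = ga[of a x] ga[of x c] ga[of a y] ga[of y z] ga[of z c] ga[of a c] ga[of x w]
  have G': "arc (g a x)" "pathstart (g a x) = P a" "pathfinish (g a x) = P x"
    "arc (g x c)" "pathstart (g x c) = P x" "pathfinish (g x c) = P c"
    "arc (g a y)" "pathstart (g a y) = P a" "pathfinish (g a y) = P y"
    "arc (g y z)" "pathstart (g y z) = P y" "pathfinish (g y z) = P z"
    "arc (g z c)" "pathstart (g z c) = P z" "pathfinish (g z c) = P c"
    "arc (g a c)" "pathstart (g a c) = P a" "pathfinish (g a c) = P c"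
    "arc (g x w)" "pathstart (g x w) = P x" "pathfinish (g x w) = P w"
    using G lt dist wl by auto
  have c1: "path_image (g a x) \<inter> path_image (g x c) \<subseteq> {P x}" using cross[of a x x c] lt dist by (auto simp: doubleton_eq_iff)
  have c2: "path_image (g y z) \<inter> path_image (g z c) \<subseteq> {P z}" using cross[of y z z c] lt dist by (auto simp: doubleton_eq_iff)
  have c3: "path_image (g a y) \<inter> path_image (g y z) \<subseteq> {P y}" using cross[of a y y z] lt dist by (auto simp: doubleton_eq_iff)
  have c4: "path_image (g a y) \<inter> path_image (g z c) = {}" using cross[of a y z c] lt dist by (auto simp: doubleton_eq_iff)
  have c5: "path_image (g a x) \<inter> path_image (g a y) \<subseteq> {P a}" using cross[of a x a y] lt dist by (auto simp: doubleton_eq_iff)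
  have c6: "path_image (g a x) \<inter> path_image (g y z) = {}" using cross[of a x y z] lt dist by (auto simp: doubleton_eq_iff)
  have c7: "path_image (g a x) \<inter> path_image (g z c) = {}" using cross[of a x z c] lt dist by (auto simp: doubleton_eq_iff)
  have c8: "path_image (g x c) \<inter> path_image (g a y) = {}" using cross[of x c a y] lt dist by (auto simp: doubleton_eq_iff)
  have c9: "path_image (g x c) \<inter> path_image (g y z) = {}" using cross[of x c y z] lt dist by (auto simp: doubleton_eq_iff)
  have c10: "path_image (g x c) \<inter> path_image (g z c) \<subseteq> {P c}" using cross[of x c z c] lt dist by (auto simp: doubleton_eq_iff)
  have c11: "path_image (g a x) \<inter> path_image (g a c) \<subseteq> {P a}" using cross[of a x a c] lt dist by (auto simp: doubleton_eq_iff)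
  have c12: "path_image (g x c) \<inter> path_image (g a c) \<subseteq> {P c}" using cross[of x c a c] lt dist by (auto simp: doubleton_eq_iff)
  have c13: "path_image (g a y) \<inter> path_image (g a c) \<subseteq> {P a}" using cross[of a y a c] lt dist by (auto simp: doubleton_eq_iff)
  have c14: "path_image (g y z) \<inter> path_image (g a c) = {}" using cross[of y z a c] lt dist by (auto simp: doubleton_eq_iff)
  have c15: "path_image (g z c) \<inter> path_image (g a c) \<subseteq> {P c}" using cross[of z c a c] lt dist by (auto simp: doubleton_eq_iff)
  have c16: "path_image (g x w) \<inter> path_image (g a c) = {}" using cross[of x w a c] lt dist wl by (auto simp: doubleton_eq_iff)
  have c17: "path_image (g x w) \<inter> path_image (g a x) \<subseteq> {P x}" using cross[of x w a x] lt dist wl by (auto simp: doubleton_eq_iff)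
  have c18: "path_image (g x w) \<inter> path_image (g x c) \<subseteq> {P x}" using cross[of x w x c] lt dist wl by (auto simp: doubleton_eq_iff)
  have c19: "path_image (g x w) \<inter> path_image (g a y) \<subseteq> {P w}" using cross[of x w a y] lt dist wl w by (auto simp: doubleton_eq_iff)
  have c20: "path_image (g x w) \<inter> path_image (g y z) \<subseteq> {P w}" using cross[of x w y z] lt dist wl w by (auto simp: doubleton_eq_iff)
  have c21: "path_image (g x w) \<inter> path_image (g z c) \<subseteq> {P w}" using cross[of x w z c] lt dist wl w by (auto simp: doubleton_eq_iff)
  have Pne: "P x \<noteq> P a" "P x \<noteq> P c" "P w \<noteq> P a" "P w \<noteq> P c" "P a \<noteq> P c"
    using Pd lt dist wl by auto
  have aP1: "arc P1" unfolding P1_def by (rule arc_join) (use G' c1 in auto)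
  have a23: "arc (g y z +++ g z c)" by (rule arc_join) (use G' c2 in auto)
  have i23: "path_image (g y z +++ g z c) = path_image (g y z) \<union> path_image (g z c)"
    using G' by (simp add: path_image_join)
  have aP2: "arc P2" unfolding P2_def by (rule arc_join) (use G' a23 c3 c4 i23 in auto)
  have iP1: "path_image P1 = path_image (g a x) \<union> path_image (g x c)"
    unfolding P1_def using G' by (simp add: path_image_join)
  have iP2: "path_image P2 = path_image (g a y) \<union> path_image (g y z) \<union> path_image (g z c)"
    unfolding P2_def using G' i23 by (simp add: path_image_join Un_assoc)
  have eP: "pathstart P1 = P a" "pathfinish P1 = P c" "pathstart P2 = P a" "pathfinish P2 = P c"
    unfolding P1_def P2_def using G' by auto
  have C: "path_image P1 \<union> path_image P2 = ?C" using iP1 iP2 by blast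
  have i12: "path_image P1 \<inter> path_image P2 \<subseteq> {P a, P c}"
    unfolding iP1 iP2 using c5 c6 c7 c8 c9 c10 by blast
  have i1A: "path_image P1 \<inter> path_image A \<subseteq> {P a, P c}"
    unfolding iP1 A_def using c11 c12 by blast
  have i2A: "path_image P2 \<inter> path_image A \<subseteq> {P a, P c}"
    unfolding iP2 A_def using c13 c14 c15 by blast
  have bP: "P x \<in> path_image P1" using iP1 G' by (metis UnI2 pathstart_in_path_image)
  have dP: "P w \<in> path_image P2" using iP2 G' w
    by (metis UnI1 UnI2 pathfinish_in_path_image pathstart_in_path_image)
  have iBJ: "path_image B \<inter> (path_image P1 \<union> path_image P2) \<subseteq> {P x, P w}"
    unfolding B_def iP1 iP2 using c17 c18 c19 c20 c21 by blast
  have iBA: "path_image B \<inter> path_image A = {}" unfolding A_def B_def using c16 by blast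
  define j where "j = P1 +++ reversepath P2"
  have sj: "simple_path j" unfolding j_def
    by (rule simple_path_join_loop) (use aP1 aP2 eP i12 in \<open>auto simp: arc_reversepath\<close>)
  have lj: "pathfinish j = pathstart j" unfolding j_def using eP by auto
  have ij: "path_image j = ?C" unfolding j_def using eP C by (simp add: path_image_join)
  have Aoff: "A ` {0<..<1} \<inter> ?C = {}"
  proof -
    have "\<And>t. t \<in> {0<..<1} \<Longrightarrow> A t \<in> path_image A \<and> A t \<noteq> P a \<and> A t \<noteq> P c"
      using arc_open_avoid[of A] G' unfolding A_def by metis
    then show ?thesis using i1A i2A C by blast
  qed
  have Boff: "B ` {0<..<1} \<inter> ?C = {}"
  proof -
    have "\<And>t. t \<in> {0<..<1} \<Longrightarrow> B t \<in> path_image B \<and> B t \<noteq> P x \<and> B t \<noteq> P w"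
      using arc_open_avoid[of B] G' unfolding B_def by metis
    then show ?thesis using iBJ C by blast
  qed
  have sA: "A ` {0<..<1} \<subseteq> inside ?C \<or> A ` {0<..<1} \<subseteq> outside ?C"
    by (rule open_arc_side[OF _ Aoff sj lj ij]) (use G' A_def in auto)
  have sB: "B ` {0<..<1} \<subseteq> inside ?C \<or> B ` {0<..<1} \<subseteq> outside ?C"
    by (rule open_arc_side[OF _ Boff sj lj ij]) (use G' B_def in auto)
  have neA: "A ` {0<..<1} \<noteq> {}" and neB: "B ` {0<..<1} \<noteq> {}" by auto
  obtain S where S: "S = inside ?C \<or> S = outside ?C" "A ` {0<..<1} \<subseteq> S" "B ` {0<..<1} \<subseteq> S"
  proof (cases "A ` {0<..<1} \<subseteq> inside ?C")
    case True
    then show ?thesis using that same A_def B_def by blast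
  next
    case False
    then have "A ` {0<..<1} \<subseteq> outside ?C" using sA by blast
    moreover have "B ` {0<..<1} \<subseteq> outside ?C" using False same sB A_def B_def by blast
    ultimately show ?thesis using that by blast
  qed
  show False
    by (rule chord_conflict[OF aP1 aP2 _ _ eP _ _ _ _ i12 i1A i2A bP Pne(1,2) dP Pne(3,4) iBJ iBA, of S])
       (use G' A_def B_def S C in auto)
qed

lemma arc_open_image:
  assumes "arc g"
  shows "g ` {0<..<1} = path_image g - {pathstart g, pathfinish g}"
proof
  show "g ` {0<..<1} \<subseteq> path_image g - {pathstart g, pathfinish g}"
  proof
    fix z assume "z \<in> g ` {0<..<1}"
    then obtain t where t: "t \<in> {0<..<1}" "z = g t" by blast
    have "g t \<noteq> pathstart g" "g t \<noteq> pathfinish g" "g t \<in> path_image g"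
      using arc_open_avoid[OF assms t(1)] by auto
    then show "z \<in> path_image g - {pathstart g, pathfinish g}" using t(2) by simp
  qed
  show "path_image g - {pathstart g, pathfinish g} \<subseteq> g ` {0<..<1}"
    using arc_image_split[OF assms] by blast
qed

lemma K5_top:
  fixes P :: "nat \<Rightarrow> complex" and g :: "nat \<Rightarrow> nat \<Rightarrow> real \<Rightarrow> complex"
  assumes Pd: "\<And>i j. i < 5 \<Longrightarrow> j < 5 \<Longrightarrow> i \<noteq> j \<Longrightarrow> P i \<noteq> P j"
    and ga: "\<And>i j. i < 5 \<Longrightarrow> j < 5 \<Longrightarrow> i \<noteq> j \<Longrightarrow> arc (g i j) \<and> pathstart (g i j) = P i \<and> pathfinish (g i j) = P j"
    and sym: "\<And>i j. i < 5 \<Longrightarrow> j < 5 \<Longrightarrow> i \<noteq> j \<Longrightarrow> path_image (g i j) = path_image (g j i)"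
    and cross: "\<And>i j k l. i < 5 \<Longrightarrow> j < 5 \<Longrightarrow> k < 5 \<Longrightarrow> l < 5 \<Longrightarrow> i \<noteq> j \<Longrightarrow> k \<noteq> l \<Longrightarrow> {i,j} \<noteq> {k,l} \<Longrightarrow>
          path_image (g i j) \<inter> path_image (g k l) \<subseteq> P ` ({i,j} \<inter> {k,l})"
  shows False
proof -
  define I where "I i j = path_image (g i j)" for i j
  define Op where "Op i j = path_image (g i j) - {P i, P j}" for i j
  have oi: "\<And>i j. i < 5 \<Longrightarrow> j < 5 \<Longrightarrow> i \<noteq> j \<Longrightarrow> g i j ` {0<..<1} = Op i j"
    unfolding Op_def using arc_open_image ga by metis
  have Osym: "\<And>i j. i < 5 \<Longrightarrow> j < 5 \<Longrightarrow> i \<noteq> j \<Longrightarrow> Op i j = Op j i"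
    unfolding Op_def using sym by blast
  have s: "I 0 4 = I 4 0" "I 4 3 = I 3 4" "I 3 2 = I 2 3" "I 1 0 = I 0 1"
    unfolding I_def using sym by auto
  define C where "C = I 0 1 \<union> I 1 2 \<union> I 2 3 \<union> I 3 4 \<union> I 4 0"
  have C1: "I 0 1 \<union> I 1 2 \<union> I 0 4 \<union> I 4 3 \<union> I 3 2 = C" unfolding C_def s by blast
  have C2: "I 0 4 \<union> I 4 3 \<union> I 0 1 \<union> I 1 2 \<union> I 2 3 = C" unfolding C_def s by blast
  have C3: "I 1 2 \<union> I 2 3 \<union> I 1 0 \<union> I 0 4 \<union> I 4 3 = C" unfolding C_def s by blast
  note cg = conflict_generic[OF Pd ga cross, unfolded I_def[symmetric]]
  have r1: "\<not> (Op 0 2 \<subseteq> inside C \<longleftrightarrow> Op 1 3 \<subseteq> inside C)"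
    using cg[of 0 1 2 4 3 3] unfolding C1 by (simp add: oi)
  have r2: "\<not> (Op 0 2 \<subseteq> inside C \<longleftrightarrow> Op 1 4 \<subseteq> inside C)"
    using cg[of 0 1 2 4 3 4] unfolding C1 by (simp add: oi)
  have r3: "\<not> (Op 0 3 \<subseteq> inside C \<longleftrightarrow> Op 1 4 \<subseteq> inside C)"
    using cg[of 0 4 3 1 2 1] Osym[of 4 1] unfolding C2 by (simp add: oi)
  have r4: "\<not> (Op 0 3 \<subseteq> inside C \<longleftrightarrow> Op 2 4 \<subseteq> inside C)"
    using cg[of 0 4 3 1 2 2] Osym[of 4 2] unfolding C2 by (simp add: oi)
  have r5: "\<not> (Op 1 3 \<subseteq> inside C \<longleftrightarrow> Op 2 4 \<subseteq> inside C)"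
    using cg[of 1 2 3 0 4 4] unfolding C3 by (simp add: oi)
  show False using r1 r2 r3 r4 r5 by argo
qed

lemma planar_no_K5:
  fixes V :: "'a set" and E :: "'a set set"
  assumes pl: "planar V E" and d: "distinct xs" "length xs = 5" "set xs \<subseteq> V"
    and adj: "\<forall>u\<in>set xs. \<forall>w\<in>set xs. u \<noteq> w \<longrightarrow> {u,w} \<in> E"
  shows False
proof -
  obtain p :: "'a \<Rightarrow> complex" and \<gamma> :: "'a set \<Rightarrow> real \<Rightarrow> complex" where
    inj: "inj_on p V" and
    ed': "\<forall>e\<in>E. arc (\<gamma> e) \<and> {pathstart (\<gamma> e), pathfinish (\<gamma> e)} = p ` e \<and>
                 path_image (\<gamma> e) \<inter> p ` V = p ` e"
    and cr': "\<forall>e\<in>E. \<forall>f\<in>E. e \<noteq> f \<longrightarrow> path_image (\<gamma> e) \<inter> path_image (\<gamma> f) \<subseteq> p ` (e \<inter> f)"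
    using pl unfolding planar_def by (elim exE conjE) (rule that)
  have ed: "\<And>e. e \<in> E \<Longrightarrow> arc (\<gamma> e) \<and> {pathstart (\<gamma> e), pathfinish (\<gamma> e)} = p ` e"
    using ed' by blast
  have cr: "\<And>e f. e \<in> E \<Longrightarrow> f \<in> E \<Longrightarrow> e \<noteq> f \<Longrightarrow> path_image (\<gamma> e) \<inter> path_image (\<gamma> f) \<subseteq> p ` (e \<inter> f)"
    using cr' by blast
  define v where "v i = xs ! i" for i
  have vinj: "\<And>i j. i < 5 \<Longrightarrow> j < 5 \<Longrightarrow> v i = v j \<longleftrightarrow> i = j"
    unfolding v_def using d by (simp add: nth_eq_iff_index_eq)
  have vV: "\<And>i. i < 5 \<Longrightarrow> v i \<in> V" unfolding v_def using d by auto
  have vE: "\<And>i j. i < 5 \<Longrightarrow> j < 5 \<Longrightarrow> i \<noteq> j \<Longrightarrow> {v i, v j} \<in> E"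
    using adj vinj d unfolding v_def by (metis nth_mem)
  define P where "P i = p (v i)" for i
  have Pd: "\<And>i j. i < 5 \<Longrightarrow> j < 5 \<Longrightarrow> i \<noteq> j \<Longrightarrow> P i \<noteq> P j"
    unfolding P_def using inj vV vinj by (metis inj_on_eq_iff)
  define g where "g i j = (if pathstart (\<gamma> {v i, v j}) = P i then \<gamma> {v i, v j} else reversepath (\<gamma> {v i, v j}))" for i j
  have ga: "arc (g i j) \<and> pathstart (g i j) = P i \<and> pathfinish (g i j) = P j"
    if "i < 5" "j < 5" "i \<noteq> j" for i j
  proof -
    have e: "arc (\<gamma> {v i, v j})" "{pathstart (\<gamma> {v i, v j}), pathfinish (\<gamma> {v i, v j})} = {P i, P j}"
      using ed[OF vE[OF that]] unfolding P_def by auto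
    have "P i \<noteq> P j" using Pd that by blast
    then show ?thesis using e unfolding g_def
      by (auto simp: arc_reversepath doubleton_eq_iff)
  qed
  have gi: "path_image (g i j) = path_image (\<gamma> {v i, v j})" for i j
    unfolding g_def by auto
  have sym: "path_image (g i j) = path_image (g j i)" for i j
    unfolding gi by (simp add: insert_commute)
  have cross: "path_image (g i j) \<inter> path_image (g k l) \<subseteq> P ` ({i,j} \<inter> {k,l})"
    if "i < 5" "j < 5" "k < 5" "l < 5" "i \<noteq> j" "k \<noteq> l" "{i,j} \<noteq> {k,l}" for i j k l
  proof -
    have ne: "{v i, v j} \<noteq> {v k, v l}" using that vinj by (auto simp: doubleton_eq_iff)
    have "path_image (g i j) \<inter> path_image (g k l) \<subseteq> p ` ({v i, v j} \<inter> {v k, v l})"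
      unfolding gi using cr[OF vE vE ne] that by blast
    also have "{v i, v j} \<inter> {v k, v l} = v ` ({i,j} \<inter> {k,l})"
      using that vinj by auto
    finally show ?thesis unfolding P_def by (simp add: image_image)
  qed
  show False
    by (rule K5_top[of P g]) (use Pd ga sym cross in auto)
qed

lemma pick2:
  assumes "finite A" "card A \<ge> 2"
  obtains a b where "a \<in> A" "b \<in> A" "a \<noteq> b"
proof -
  have "\<not> card A \<le> Suc 0" using assms(2) by simp
  then show ?thesis using that card_le_Suc0_iff_eq[OF assms(1)] by blast
qed

lemma pick1:
  assumes "finite A" "card A \<ge> 1"
  obtains a where "a \<in> A"
  using assms by fastforce

lemma card3: "card {a,b,c} \<le> 3"
  by (auto simp: card_insert_if)

lemma card2: "card {a,b} \<le> 2"
  by (auto simp: card_insert_if)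

lemma card_Diff_ge:
  assumes "finite X"
  shows "card A - card X \<le> card (A - X)"
  using diff_card_le_card_Diff[OF assms] by simp

lemma handshake:
  assumes "finite W" "finite F" "\<forall>e\<in>F. e \<subseteq> W \<and> card e = 2"
  shows "(\<Sum>v\<in>W. card {e\<in>F. v \<in> e}) = 2 * card F"
proof -
  have "(\<Sum>v\<in>W. card {e\<in>F. v \<in> e}) = (\<Sum>v\<in>W. \<Sum>e\<in>F. if v \<in> e then 1 else 0)"
    using assms(2) by (simp add: sum.If_cases Int_def)
  also have "\<dots> = (\<Sum>e\<in>F. \<Sum>v\<in>W. if v \<in> e then 1 else 0)"
    by (rule sum.swap)
  also have "\<dots> = (\<Sum>e\<in>F. card (W \<inter> e))"
    using assms(1) by (simp add: sum.If_cases)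
  also have "\<dots> = (\<Sum>e\<in>F. 2)"
    using assms(3) by (intro sum.cong) (auto simp: Int_absorb1)
  finally show ?thesis by simp
qed

locale sgraph =
  fixes V :: "'a set" and E :: "'a set set"
  assumes sg: "simple_graph V E"
    and noS: "\<not> contains_S22 V E"
    and noK: "\<And>S. S \<subseteq> V \<Longrightarrow> card S = 5 \<Longrightarrow> \<exists>u\<in>S. \<exists>w\<in>S. u \<noteq> w \<and> {u,w} \<notin> E"
begin

definition N where "N v = {u \<in> V. {u,v} \<in> E}"
definition deg where "deg v = card (N v)"
definition inc where "inc v = {e \<in> E. v \<in> e}"

lemma finV: "finite V" using sg by (simp add: simple_graph_def)
lemma Esub: "e \<in> E \<Longrightarrow> e \<subseteq> V \<and> card e = 2" using sg by (simp add: simple_graph_def)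
lemma finE: "finite E"
proof -
  have "E \<subseteq> Pow V" using Esub by auto
  then show ?thesis using finV finite_subset by blast
qed
lemma finN: "finite (N v)" unfolding N_def using finV by simp
lemma NV: "N v \<subseteq> V" unfolding N_def by auto
lemma notinN: "v \<notin> N v" unfolding N_def using Esub by fastforce
lemma Nsym: "u \<in> N v \<Longrightarrow> v \<in> N u"
  unfolding N_def using Esub by (auto simp: insert_commute)
lemma Nedge: "u \<in> N v \<Longrightarrow> {v,u} \<in> E" "u \<in> N v \<Longrightarrow> {u,v} \<in> E"
  unfolding N_def by (auto simp: insert_commute)
lemma NinV: "u \<in> N v \<Longrightarrow> v \<in> V" using Nsym NV by blast

lemma inc_eq: "inc v = (\<lambda>u. {u,v}) ` N v"
proof
  show "inc v \<subseteq> (\<lambda>u. {u,v}) ` N v"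
  proof
    fix e assume e: "e \<in> inc v"
    then have "e \<in> E" "v \<in> e" by (auto simp: inc_def)
    then obtain x y where xy: "e = {x,y}" "x \<noteq> y" using Esub card_2_iff by metis
    then obtain u where u: "e = {u,v}" using \<open>v \<in> e\<close> by (auto simp: insert_commute)
    then have "u \<in> V" using Esub \<open>e \<in> E\<close> by auto
    then show "e \<in> (\<lambda>u. {u,v}) ` N v" using u \<open>e \<in> E\<close> by (auto simp: N_def)
  qed
  show "(\<lambda>u. {u,v}) ` N v \<subseteq> inc v" by (auto simp: N_def inc_def)
qed

lemma card_inc: "card (inc v) = deg v"
proof -
  have "inj_on (\<lambda>u. {u,v}) (N v)"
    using notinN by (auto simp: inj_on_def doubleton_eq_iff)
  then show ?thesis unfolding inc_eq deg_def by (simp add: card_image)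
qed

lemma sum_deg: "(\<Sum>v\<in>V. deg v) = 2 * card E"
proof -
  have "(\<Sum>v\<in>V. deg v) = (\<Sum>v\<in>V. card {e\<in>E. v \<in> e})"
    using card_inc by (simp add: inc_def)
  also have "\<dots> = 2 * card E" by (rule handshake[OF finV finE]) (use Esub in auto)
  finally show ?thesis .
qed

lemma S22:
  assumes "y \<in> N x" "a \<in> N x" "b \<in> N x" "c \<in> N y" "d \<in> N y" "distinct [x,y,a,b,c,d]"
  shows False
proof -
  have V: "{x,y,a,b,c,d} \<subseteq> V" using assms NV NinV by auto
  have "contains_S22 V E" unfolding contains_S22_def
    apply (rule exI[of _ x], rule exI[of _ y], rule exI[of _ a], rule exI[of _ b], rule exI[of _ c], rule exI[of _ d])
    using assms(6) V Nedge(1)[OF assms(1)] Nedge(1)[OF assms(2)] Nedge(1)[OF assms(3)]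
      Nedge(1)[OF assms(4)] Nedge(1)[OF assms(5)] by simp
  then show False using noS by simp
qed

lemma high_nbr:
  assumes "deg h \<ge> 5" "y \<in> N h"
  shows "deg y \<le> 2"
proof (rule ccontr)
  assume "\<not> deg y \<le> 2"
  then have "card (N y - {h}) \<ge> 2" using card_Diff_ge[of "{h}" "N y"] deg_def by simp
  then obtain c d where cd: "c \<in> N y - {h}" "d \<in> N y - {h}" "c \<noteq> d"
    using pick2 finN by (metis finite_Diff)
  have "card (N h - {y,c,d}) \<ge> 2"
  proof -
    have "card (N h) - card {y,c,d} \<le> card (N h - {y,c,d})" by (rule card_Diff_ge) simp
    then show ?thesis using card3[of y c d] assms(1) deg_def[of h] by linarith
  qed
  then obtain a b where ab: "a \<in> N h - {y,c,d}" "b \<in> N h - {y,c,d}" "a \<noteq> b"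
    using pick2 finN by (metis finite_Diff)
  have "distinct [h,y,a,b,c,d]"
    using ab cd notinN assms(2) by auto
  then show False using S22[OF assms(2) _ _ _ _] ab cd by blast
qed

end

context sgraph begin

lemma deg4_nbr:
  assumes "deg x = 4" "y \<in> N x" "deg y \<ge> 3"
  shows "N y \<subseteq> insert x (N x)"
proof
  fix z assume z: "z \<in> N y"
  show "z \<in> insert x (N x)"
  proof (rule ccontr)
    assume nz: "z \<notin> insert x (N x)"
    have "card (N y) - card {x,z} \<le> card (N y - {x,z})" by (rule card_Diff_ge) simp
    then have "card (N y - {x,z}) \<ge> 1" using card2[of x z] assms(3) deg_def[of y] by linarith
    then obtain t where t: "t \<in> N y - {x,z}" using pick1 finN by (metis finite_Diff)
    have "card (N x) - card {y,t} \<le> card (N x - {y,t})" by (rule card_Diff_ge) simp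
    then have "card (N x - {y,t}) \<ge> 2" using card2[of y t] assms(1) deg_def[of x] by linarith
    then obtain a b where ab: "a \<in> N x - {y,t}" "b \<in> N x - {y,t}" "a \<noteq> b"
      using pick2 finN by (metis finite_Diff)
    have "distinct [x,y,a,b,z,t]"
      using ab t nz z notinN assms(2) by auto
    moreover have "a \<in> N x" "b \<in> N x" "t \<in> N y" using ab t by auto
    ultimately show False using S22[OF assms(2) _ _ z] by blast
  qed
qed

lemma closed_ball:
  assumes "deg x = 4" "\<forall>y\<in>N x. deg y \<ge> 3"
  shows "\<forall>s\<in>insert x (N x). N s \<subseteq> insert x (N x)"
    and "\<exists>u\<in>insert x (N x). \<exists>w\<in>insert x (N x). u \<noteq> w \<and> deg u \<le> 3 \<and> deg w \<le> 3"
proof -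
  show cl: "\<forall>s\<in>insert x (N x). N s \<subseteq> insert x (N x)"
    using deg4_nbr assms by blast
  let ?S = "insert x (N x)"
  have xV: "x \<in> V"
  proof -
    have "N x \<noteq> {}" using assms(1) deg_def by auto
    then show ?thesis using NinV by blast
  qed
  have cS: "card ?S = 5" using assms(1) notinN finN deg_def by simp
  have SV: "?S \<subseteq> V" using xV NV by blast
  obtain u w where uw: "u \<in> ?S" "w \<in> ?S" "u \<noteq> w" "{u,w} \<notin> E"
    using noK[OF SV cS] by blast
  have ux: "u \<noteq> x" using uw Nedge by (auto simp: insert_commute)
  have wx: "w \<noteq> x" using uw Nedge by (auto simp: insert_commute)
  have du: "deg u \<le> 3" if "u \<in> ?S" "w \<in> ?S" "u \<noteq> w" "{u,w} \<notin> E" for u w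
  proof -
    have "N u \<subseteq> ?S - {u,w}" using cl that notinN Nedge(2)[of w u] by (auto simp: insert_commute)
    then have "card (N u) \<le> card (?S - {u,w})" by (rule card_mono[rotated]) (use finN in simp)
    also have "\<dots> = 3" using that cS finN by (simp add: card_Diff_subset)
    finally show ?thesis by (simp add: deg_def)
  qed
  show "\<exists>u\<in>?S. \<exists>w\<in>?S. u \<noteq> w \<and> deg u \<le> 3 \<and> deg w \<le> 3"
  proof -
    have "{w,u} \<notin> E" using uw(4) by (simp add: insert_commute)
    then have "deg w \<le> 3" using du[OF uw(2) uw(1) uw(3)[symmetric]] by blast
    then show ?thesis using du[OF uw] uw(1-3) by blast
  qed
qed

end

context sgraph begin
lemma high_case:
  assumes "h \<in> V" "deg h \<ge> 5"
  shows "card E \<le> 2 * card V - 2"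
proof -
  define Lo where "Lo = {v\<in>V. deg v \<le> 2}"
  define M where "M = {v\<in>V. 3 \<le> deg v \<and> deg v \<le> 4}"
  define F where "F = {e\<in>E. e \<subseteq> M}"
  have finLo: "finite Lo" "finite M" using finV by (auto simp: Lo_def M_def)
  have Ecov: "E \<subseteq> (\<Union>v\<in>Lo. inc v) \<union> F"
  proof
    fix e assume e: "e \<in> E"
    then obtain u w where uw: "e = {u,w}" "u \<noteq> w" using Esub card_2_iff by metis
    have un: "u \<in> N w" "w \<in> N u" using e uw Esub by (auto simp: N_def insert_commute)
    have uV: "u \<in> V" "w \<in> V" using un NV by blast+
    have ei: "e \<in> inc u" "e \<in> inc w" using e uw by (auto simp: inc_def)
    show "e \<in> (\<Union>v\<in>Lo. inc v) \<union> F"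
    proof (cases "deg u \<le> 2")
      case True
      then have "u \<in> Lo" using uV by (simp add: Lo_def)
      then show ?thesis using ei by blast
    next
      case False
      show ?thesis
      proof (cases "deg w \<le> 2")
        case True
        then have "w \<in> Lo" using uV by (simp add: Lo_def)
        then show ?thesis using ei by blast
      next
        case F2: False
        have "deg u \<le> 4" using high_nbr[OF _ un(2)] F2 by force
        moreover have "deg w \<le> 4" using high_nbr[OF _ un(1)] False by force
        ultimately have "u \<in> M" "w \<in> M" using False F2 uV by (auto simp: M_def)
        then have "e \<in> F" using e uw by (simp add: F_def)
        then show ?thesis by blast
      qed
    qed
  qed
  have "card E \<le> card ((\<Union>v\<in>Lo. inc v) \<union> F)"
    by (rule card_mono[OF _ Ecov]) (use finE finLo in \<open>auto simp: inc_def F_def\<close>)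
  also have "\<dots> \<le> card (\<Union>v\<in>Lo. inc v) + card F" by (rule card_Un_le)
  also have "card (\<Union>v\<in>Lo. inc v) \<le> (\<Sum>v\<in>Lo. card (inc v))" by (rule card_UN_le) (use finLo in simp)
  also have "(\<Sum>v\<in>Lo. card (inc v)) \<le> (\<Sum>v\<in>Lo. 2)"
    by (rule sum_mono) (simp add: card_inc Lo_def)
  also have "card F \<le> 2 * card M"
  proof -
    have "2 * card F = (\<Sum>v\<in>M. card {e\<in>F. v \<in> e})"
      by (rule handshake[symmetric]) (use finLo finE Esub in \<open>auto simp: F_def\<close>)
    also have "\<dots> \<le> (\<Sum>v\<in>M. card (inc v))"
      by (rule sum_mono, rule card_mono) (use finE in \<open>auto simp: inc_def F_def\<close>)
    also have "\<dots> \<le> (\<Sum>v\<in>M. 4)"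
      by (rule sum_mono) (simp add: card_inc M_def)
    finally show ?thesis by simp
  qed
  finally have "card E \<le> 2 * (card Lo + card M)" by simp
  moreover have "card Lo + card M \<le> card V - 1"
  proof -
    have "card Lo + card M = card (Lo \<union> M)" 
      by (rule card_Un_disjoint[symmetric]) (use finLo in \<open>auto simp: Lo_def M_def\<close>)
    also have "\<dots> \<le> card (V - {h})"
      by (rule card_mono) (use finV assms in \<open>auto simp: Lo_def M_def\<close>)
    finally show ?thesis using assms(1) finV by simp
  qed
  ultimately show ?thesis by arith
qed

end

context sgraph begin

lemma low_case:
  assumes low: "\<forall>v\<in>V. deg v \<le> 4" and n6: "card V \<ge> 6"
  shows "card E \<le> 2 * card V - 2"
proof -
  define dfc where "dfc v = 4 - deg v" for v
  have tot: "(\<Sum>v\<in>V. deg v) + (\<Sum>v\<in>V. dfc v) = 4 * card V"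
  proof -
    have "(\<Sum>v\<in>V. deg v) + (\<Sum>v\<in>V. dfc v) = (\<Sum>v\<in>V. deg v + dfc v)" by (simp add: sum.distrib)
    also have "\<dots> = (\<Sum>v\<in>V. 4)" using low by (intro sum.cong) (auto simp: dfc_def)
    finally show ?thesis by simp
  qed
  have sub: "\<And>T. T \<subseteq> V \<Longrightarrow> (\<Sum>v\<in>T. dfc v) \<le> (\<Sum>v\<in>V. dfc v)"
    by (rule sum_mono2[OF finV]) auto
  have two: "\<And>u w. u \<in> V \<Longrightarrow> w \<in> V \<Longrightarrow> u \<noteq> w \<Longrightarrow> deg u \<le> 3 \<Longrightarrow> deg w \<le> 3 \<Longrightarrow> (\<Sum>v\<in>{u,w}. dfc v) \<ge> 2"
    by (auto simp: dfc_def)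
  have D4: "(\<Sum>v\<in>V. dfc v) \<ge> 4"
  proof (rule ccontr)
    assume "\<not> (\<Sum>v\<in>V. dfc v) \<ge> 4"
    then have D: "(\<Sum>v\<in>V. dfc v) \<le> 3" by simp
    define Lo where "Lo = {v\<in>V. deg v \<le> 2}"
    define Bad where "Bad = {v\<in>V. deg v \<le> 3}"
    have fin: "finite Lo" "finite Bad" using finV by (auto simp: Lo_def Bad_def)
    have LoBad: "Lo \<subseteq> Bad" by (auto simp: Lo_def Bad_def)
    have cBL: "card Bad + card Lo \<le> 3"
    proof -
      have "(\<Sum>v\<in>Bad. dfc v) = (\<Sum>v\<in>Bad - Lo. dfc v) + (\<Sum>v\<in>Lo. dfc v)"
        by (rule sum.subset_diff[OF LoBad fin(2)])
      moreover have "(\<Sum>v\<in>Bad - Lo. dfc v) \<ge> (\<Sum>v\<in>Bad - Lo. 1)"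
        by (rule sum_mono) (auto simp: dfc_def Bad_def)
      moreover have "(\<Sum>v\<in>Lo. dfc v) \<ge> (\<Sum>v\<in>Lo. 2)"
        by (rule sum_mono) (auto simp: dfc_def Lo_def)
      moreover have "card (Bad - Lo) = card Bad - card Lo" using LoBad fin by (simp add: card_Diff_subset)
      moreover have "card Lo \<le> card Bad" using LoBad fin by (simp add: card_mono)
      moreover have "(\<Sum>v\<in>Bad. dfc v) \<le> 3" using sub[of Bad] D by (auto simp: Bad_def)
      ultimately show ?thesis by simp
    qed
    define X where "X = V - Bad - (\<Union>w\<in>Lo. N w)"
    have cU: "card (\<Union>w\<in>Lo. N w) \<le> 2 * card Lo"
    proof -
      have "card (\<Union>w\<in>Lo. N w) \<le> (\<Sum>w\<in>Lo. card (N w))" by (rule card_UN_le[OF fin(1)])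
      also have "\<dots> \<le> (\<Sum>w\<in>Lo. 2)" by (rule sum_mono) (auto simp: Lo_def deg_def)
      finally show ?thesis by simp
    qed
    have "card V - card Bad - card (\<Union>w\<in>Lo. N w) \<le> card X"
    proof -
      have "card V - card Bad \<le> card (V - Bad)" by (rule card_Diff_ge[OF fin(2)])
      moreover have "card (V - Bad) - card (\<Union>w\<in>Lo. N w) \<le> card X"
        unfolding X_def by (rule card_Diff_ge) (use fin(1) finN in simp)
      ultimately show ?thesis by linarith
    qed
    then have "card X \<ge> 1" using cU cBL n6 card_mono[OF fin(2) LoBad] by arith
    then obtain x where x: "x \<in> X" using pick1 by (metis card.infinite not_one_le_zero)
    have xV: "x \<in> V" and dx: "deg x = 4" using x low by (auto simp: X_def Bad_def)
    have nx: "\<forall>y\<in>N x. deg y \<ge> 3"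
    proof
      fix y assume y: "y \<in> N x"
      show "deg y \<ge> 3"
      proof (rule ccontr)
        assume "\<not> deg y \<ge> 3"
        then have "y \<in> Lo" using y NV by (auto simp: Lo_def)
        moreover have "x \<in> N y" using Nsym y by blast
        ultimately show False using x by (auto simp: X_def)
      qed
    qed
    note cbx = closed_ball[OF dx nx]
    define S where "S = insert x (N x)"
    obtain u w where uw: "u \<in> S" "w \<in> S" "u \<noteq> w" "deg u \<le> 3" "deg w \<le> 3"
      using cbx(2) S_def by blast
    have SV: "S \<subseteq> V" using xV NV S_def by blast
    have cS: "card S = 5" using dx notinN finN deg_def S_def by simp
    define R where "R = V - S"
    have cR: "card R = card V - 5" using cS SV finV card_Diff_subset[of S V] finite_subset[OF SV] by (simp add: R_def)
    have RD: "(\<Sum>v\<in>R. dfc v) \<le> 1"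
    proof -
      have "(\<Sum>v\<in>R \<union> {u,w}. dfc v) = (\<Sum>v\<in>R. dfc v) + (\<Sum>v\<in>{u,w}. dfc v)"
        by (rule sum.union_disjoint) (use finV uw in \<open>auto simp: R_def\<close>)
      moreover have "(\<Sum>v\<in>R \<union> {u,w}. dfc v) \<le> 3"
      proof -
        have "R \<union> {u,w} \<subseteq> V" using uw SV by (auto simp: R_def)
        then show ?thesis using sub[of "R \<union> {u,w}"] D by linarith
      qed
      moreover have "(\<Sum>v\<in>{u,w}. dfc v) \<ge> 2" using two uw SV by blast
      ultimately show ?thesis by linarith
    qed
    have Rcl: "\<And>z. z \<in> R \<Longrightarrow> N z \<subseteq> R"
    proof -
      fix z assume z: "z \<in> R"
      show "N z \<subseteq> R"
      proof
        fix s assume s: "s \<in> N z"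
        have "s \<notin> S"
        proof
          assume "s \<in> S"
          then have "N s \<subseteq> S" using cbx(1) S_def by blast
          then show False using Nsym[OF s] z by (auto simp: R_def)
        qed
        then show "s \<in> R" using s NV by (auto simp: R_def)
      qed
    qed
    have Rdfc: "\<And>z. z \<in> R \<Longrightarrow> dfc z \<le> 1"
    proof -
      fix z assume "z \<in> R"
      then have "(\<Sum>v\<in>{z}. dfc v) \<le> (\<Sum>v\<in>R. dfc v)"
        by (intro sum_mono2) (use finV in \<open>auto simp: R_def\<close>)
      then show "dfc z \<le> 1" using RD by simp
    qed
    show False
    proof (cases "card R = 1")
      case True
      then obtain z where Rz: "R = {z}" using card_1_singletonE by blast
      have "N z \<subseteq> {z}" using Rcl[of z] Rz by blast
      then have "N z = {}" using notinN by blast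
      then have "dfc z = 4" by (simp add: dfc_def deg_def)
      then show False using Rdfc Rz by fastforce
    next
      case False
      then have cR2: "card R \<ge> 2" using cR n6 by linarith
      have finR: "finite R" using finV by (simp add: R_def)
      have "card (R \<inter> Bad) \<le> 1"
      proof -
        have "(\<Sum>v\<in>R \<inter> Bad. 1) \<le> (\<Sum>v\<in>R \<inter> Bad. dfc v)"
          by (rule sum_mono) (auto simp: dfc_def Bad_def)
        also have "\<dots> \<le> (\<Sum>v\<in>R. dfc v)" by (rule sum_mono2) (use finR in auto)
        finally show ?thesis using RD by simp
      qed
      moreover have "card R - card (R \<inter> Bad) \<le> card (R - (R \<inter> Bad))"
        by (rule card_Diff_ge) (use fin(2) in simp)
      moreover have "R - (R \<inter> Bad) = R - Bad" by blast
      ultimately have "card R - card (R \<inter> Bad) \<le> card (R - Bad)" by simp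
      then have "card (R - Bad) \<ge> 1" using cR2 \<open>card (R \<inter> Bad) \<le> 1\<close> by linarith
      then obtain x' where x': "x' \<in> R - Bad" by (metis card.infinite not_one_le_zero pick1)
      have x'V: "x' \<in> V" and dx': "deg x' = 4" using x' low by (auto simp: R_def Bad_def)
      have nx': "\<forall>y\<in>N x'. deg y \<ge> 3"
      proof
        fix y assume y: "y \<in> N x'"
        then have "y \<in> R" using Rcl x' by blast
        then have "dfc y \<le> 1" by (rule Rdfc)
        then show "deg y \<ge> 3" by (simp add: dfc_def)
      qed
      obtain u' w' where uw': "u' \<in> insert x' (N x')" "w' \<in> insert x' (N x')" "u' \<noteq> w'"
          "deg u' \<le> 3" "deg w' \<le> 3"
        using closed_ball(2)[OF dx' nx'] by blast
      have S'R: "insert x' (N x') \<subseteq> R" using Rcl x' by blast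
      have "(\<Sum>v\<in>{u',w'}. dfc v) \<le> (\<Sum>v\<in>R. dfc v)"
        by (rule sum_mono2[OF finR]) (use uw' S'R in auto)
      moreover have "(\<Sum>v\<in>{u',w'}. dfc v) \<ge> 2" using two uw' S'R by (auto simp: R_def)
      ultimately show False using RD by linarith
    qed
  qed
  show ?thesis using tot D4 sum_deg by linarith
qed

end

lemma noK5:
  assumes "planar V E" "S \<subseteq> V" "card S = 5"
  shows "\<exists>u\<in>S. \<exists>w\<in>S. u \<noteq> w \<and> {u,w} \<notin> E"
proof (rule ccontr)
  assume H: "\<not> (\<exists>u\<in>S. \<exists>w\<in>S. u \<noteq> w \<and> {u,w} \<notin> E)"
  have "finite S" using assms(3) card.infinite by fastforce
  then obtain xs where xs: "set xs = S" "distinct xs" using finite_distinct_list by blast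
  have "length xs = 5" using xs assms(3) distinct_card by fastforce
  then show False using planar_no_K5[OF assms(1) xs(2) _ ] xs assms(2) H by blast
qed

theorem lemma2p1:
  fixes V :: "'a set" and E :: "'a set set" and n :: nat
  assumes "simple_graph V E"
    and "card V = n" and "n \<ge> 1" and "n \<noteq> 5"
    and "planar V E"
    and "\<not> contains_S22 V E"
  shows "card E \<le> 2 * n - 2"
proof (cases "n \<le> 4")
  case True
  have finV: "finite V" using assms(1) by (simp add: simple_graph_def)
  have "E \<subseteq> {B. B \<subseteq> V \<and> card B = 2}" using assms(1) by (auto simp: simple_graph_def)
  then have "card E \<le> card {B. B \<subseteq> V \<and> card B = 2}"
    by (rule card_mono[rotated]) (use finV in simp)
  also have "\<dots> = n choose 2" using finV assms(2) by (simp add: n_subsets)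
  also have "\<dots> = n * (n - 1) div 2" by (simp add: choose_two)
  finally have "card E \<le> n * (n - 1) div 2" .
  moreover have "n * (n - 1) div 2 \<le> 2 * n - 2"
  proof -
    have "n = 1 \<or> n = 2 \<or> n = 3 \<or> n = 4" using True assms(3) by auto
    then show ?thesis by auto
  qed
  ultimately show ?thesis by linarith
next
  case False
  then have n6: "card V \<ge> 6" using assms(2,4) by simp
  interpret sgraph V E
    by unfold_locales (use assms(1,6) noK5[OF assms(5)] in auto)
  show ?thesis
  proof (cases "\<exists>h\<in>V. deg h \<ge> 5")
    case True
    then show ?thesis using high_case assms(2) by blast
  next
    case False
    then have "\<forall>v\<in>V. deg v \<le> 4" by auto
    then show ?thesis using low_case n6 assms(2) by blast
  qed
qed

end
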